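(* Let $G=(V,E,\Omega)$ be a connected finite graph with vertex set $V\subset\mathbb{R}^n$, edge set $E$ and a non-empty set $\Omega\subset V$, let $f:\Omega\to\mathbb{R}$, and let $u:V\to\mathbb{R}$ be the Kirszbraun extension of $f$ on $G$. Then $$\sup_{x,y\in V,\,x\neq y}\frac{|u(x)-u(y)|}{d_g(x,y)}\le\sup_{x,y\in\Omega,\,x\ne y}\frac{|f(x)-f(y)|}{d_g(x,y)},$$ and $\inf_{z\in\Omega}f(z)\le u(x)\le\sup_{z\in\Omega}f(z)$ for all $x\in V$.
   Context: For $x\in V$, $S(x):=\{y\in V:(x,y)\in E\}$; $\|\cdot\|$ is the Euclidean norm. For a finite set $A\subset\mathbb{R}^n$, $g:A\to\mathbb{R}$ and $x\in\mathbb{R}^n\setminus A$, $K(g,A)(x)$ is the unique $y\in\mathbb{R}$ minimizing $\sup_{a\in A}|g(a)-y|/\|a-x\|$. A Kirszbraun extension of $f$ on $G$ is a function $u:V\to\mathbb{R}$ with $u=f$ on $\Omega$ and $u(x)=K(u,S(x))(x)$ for all $x\in V\setminus\Omega$ (such $u$ exists and is unique in this real-valued setting). The geodesic metric $d_g$ of $G$: for $x,y\in V$, $d_g(x,y)$ is the infimum of $\sum_{i=1}^{k-1}\|x_{i+1}-x_i\|$ over all chains $x_1=x,x_2,\dots,x_k=y$ in $V$ with $x_i\in S(x_{i+1})$ for $i=1,\dots,k-1$. *)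

theory Defs
  imports "HOL-Analysis.Analysis"
begin

definition nbhd :: "'a set \<Rightarrow> ('a \<times> 'a) set \<Rightarrow> 'a \<Rightarrow> 'a set" where
  "nbhd V E x = {y \<in> V. (x, y) \<in> E}"

definition kirsz_K :: "(real^'n \<Rightarrow> real) \<Rightarrow> (real^'n) set \<Rightarrow> real^'n \<Rightarrow> real" where
  "kirsz_K g A x = (THE y. \<forall>z.
      (SUP a\<in>A. \<bar>g a - y\<bar> / norm (a - x)) \<le> (SUP a\<in>A. \<bar>g a - z\<bar> / norm (a - x)))"

definition is_kirszbraun_ext ::
  "(real^'n) set \<Rightarrow> ((real^'n) \<times> (real^'n)) set \<Rightarrow> (real^'n) set
     \<Rightarrow> (real^'n \<Rightarrow> real) \<Rightarrow> (real^'n \<Rightarrow> real) \<Rightarrow> bool" where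
  "is_kirszbraun_ext V E \<Omega> f u \<longleftrightarrow>
     (\<forall>x\<in>\<Omega>. u x = f x) \<and> (\<forall>x\<in>V - \<Omega>. u x = kirsz_K u (nbhd V E x) x)"

text \<open>Chains x_1 = x, ..., x_k = y (as a list, k \<ge> 1) in V with x_i \<in> S(x_{i+1}).\<close>
definition is_chain :: "'a set \<Rightarrow> ('a \<times> 'a) set \<Rightarrow> 'a list \<Rightarrow> 'a \<Rightarrow> 'a \<Rightarrow> bool" where
  "is_chain V E xs x y \<longleftrightarrow> xs \<noteq> [] \<and> hd xs = x \<and> last xs = y \<and> set xs \<subseteq> V \<and>
     (\<forall>i. Suc i < length xs \<longrightarrow> (xs ! Suc i, xs ! i) \<in> E)"

definition chain_length :: "(real^'n) list \<Rightarrow> real" where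
  "chain_length xs = (\<Sum>i<length xs - 1. norm (xs ! Suc i - xs ! i))"

definition geod_dist ::
  "(real^'n) set \<Rightarrow> ((real^'n) \<times> (real^'n)) set \<Rightarrow> real^'n \<Rightarrow> real^'n \<Rightarrow> real" where
  "geod_dist V E x y = Inf {chain_length xs | xs. is_chain V E xs x y}"

definition finite_graph :: "'a set \<Rightarrow> ('a \<times> 'a) set \<Rightarrow> bool" where
  "finite_graph V E \<longleftrightarrow> finite V \<and> E \<subseteq> V \<times> V \<and> sym E \<and> (\<forall>x. (x, x) \<notin> E)"

definition graph_connected :: "'a set \<Rightarrow> ('a \<times> 'a) set \<Rightarrow> bool" where
  "graph_connected V E \<longleftrightarrow> (\<forall>x\<in>V. \<forall>y\<in>V. \<exists>xs. is_chain V E xs x y)"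

definition sup0 :: "real set \<Rightarrow> real" where
  "sup0 S = Sup (insert 0 S)"

end

theory Submission
  imports Defs
begin


lemma chain_length_single: "chain_length [a] = 0" by (simp add: chain_length_def)
lemma chain_length_cons2: "chain_length (a # b # xs) = norm (b - a) + chain_length (b # xs)"
  unfolding chain_length_def by (simp only: length_Cons diff_Suc_1 sum.lessThan_Suc_shift) simp
lemma is_chain_single: "is_chain V E [a] x y \<longleftrightarrow> a = x \<and> a = y \<and> a \<in> V"
  by (auto simp: is_chain_def)
lemma is_chain_cons2: "is_chain V E (a # b # xs) x y \<longleftrightarrow> a = x \<and> a \<in> V \<and> (b, a) \<in> E \<and> is_chain V E (b # xs) b y"
  unfolding is_chain_def
proof (intro iffI conjI; (elim conjE)?)
  assume H: "\<forall>i. Suc i < length (a # b # xs) \<longrightarrow> ((a # b # xs) ! Suc i, (a # b # xs) ! i) \<in> E"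
  then show "(b, a) \<in> E" by (metis Suc_less_eq length_Cons nth_Cons_0 nth_Cons_Suc zero_less_Suc)
  show "\<forall>i. Suc i < length (b # xs) \<longrightarrow> ((b # xs) ! Suc i, (b # xs) ! i) \<in> E"
    using H by (metis Suc_less_eq length_Cons nth_Cons_Suc)
qed (auto simp: nth_Cons split: nat.splits)

lemma is_chain_cons2D: "is_chain V E (a # b # xs) x y \<Longrightarrow> a = x \<and> a \<in> V \<and> (b, a) \<in> E \<and> is_chain V E (b # xs) b y"
  using is_chain_cons2 by metis
lemma my_list012: "P [] \<Longrightarrow> (\<And>a. P [a]) \<Longrightarrow> (\<And>a b zs. P zs \<Longrightarrow> P (b # zs) \<Longrightarrow> P (a # b # zs)) \<Longrightarrow> P xs"
  by (induction xs rule: induct_list012) auto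

lemma chain_length_nonneg: "0 \<le> chain_length xs"
  unfolding chain_length_def by (simp add: sum_nonneg)

lemma chain_norm: "is_chain V E xs x y \<Longrightarrow> norm (y - x) \<le> chain_length xs"
proof (induction xs arbitrary: x rule: my_list012)
  case 1 then show ?case by (simp add: is_chain_def)
next
  case (2 a) then show ?case by (auto simp: is_chain_single chain_length_single)
next
  case (3 a b zs)
  have c: "a = x" "is_chain V E (b # zs) b y" using is_chain_cons2D[OF 3(3)] by auto
  have "norm (y - x) \<le> norm (b - x) + norm (y - b)"
    by (metis add.commute diff_add_cancel norm_triangle_ineq add_diff_eq)
  also have "\<dots> \<le> norm (b - a) + chain_length (b # zs)" using 3(2)[OF c(2)] c(1) by simp
  finally show ?case by (simp add: chain_length_cons2)
qed

lemma chain_append: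
  "is_chain V E xs x y \<Longrightarrow> is_chain V E ys y z \<Longrightarrow>
   is_chain V E (xs @ tl ys) x z \<and> chain_length (xs @ tl ys) = chain_length xs + chain_length ys"
proof (induction xs arbitrary: x rule: my_list012)
  case 1 then show ?case by (simp add: is_chain_def)
next
  case (2 a)
  then have "ys = y # tl ys" "a = x" "a = y" unfolding is_chain_def by auto
  then show ?case using 2 by (metis append_Cons append_Nil chain_length_single add_0)
next
  case (3 a b zs)
  have c: "a = x" "a \<in> V" "(b, a) \<in> E" "is_chain V E (b # zs) b y" using is_chain_cons2D[OF 3(3)] by auto
  have IH: "is_chain V E (b # zs @ tl ys) b z \<and> chain_length (b # zs @ tl ys) = chain_length (b # zs) + chain_length ys"
    using 3(2)[OF c(4) 3(4)] by simp
  show ?case using IH c by (simp add: is_chain_cons2 chain_length_cons2)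
qed

lemma chain_lip:
  fixes u :: "real^'n \<Rightarrow> real"
  assumes "\<And>p q. (p, q) \<in> E \<Longrightarrow> \<bar>u p - u q\<bar> \<le> L * norm (p - q)"
  shows "is_chain V E xs x y \<Longrightarrow> \<bar>u x - u y\<bar> \<le> L * chain_length xs"
proof (induction xs arbitrary: x rule: my_list012)
  case 1 then show ?case by (simp add: is_chain_def)
next
  case (2 a) then show ?case by (auto simp: is_chain_single chain_length_single)
next
  case (3 a b zs)
  have c: "a = x" "(b, a) \<in> E" "is_chain V E (b # zs) b y" using is_chain_cons2D[OF 3(3)] by auto
  have "\<bar>u x - u y\<bar> \<le> \<bar>u b - u a\<bar> + \<bar>u b - u y\<bar>" using c(1) by (smt (verit))
  also have "\<dots> \<le> L * norm (b - a) + L * chain_length (b # zs)"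
    using assms[OF c(2)] 3(2)[OF c(3)] by linarith
  finally show ?case by (simp add: chain_length_cons2 algebra_simps)
qed

lemma gd_lower: "is_chain V E xs x y \<Longrightarrow> geod_dist V E x y \<le> chain_length xs"
  unfolding geod_dist_def
  by (rule cInf_lower) (auto intro!: bdd_belowI[of _ 0] chain_length_nonneg)

lemma gd_ge: "\<exists>xs. is_chain V E xs x y \<Longrightarrow> (\<And>xs. is_chain V E xs x y \<Longrightarrow> c \<le> chain_length xs)
   \<Longrightarrow> c \<le> geod_dist V E x y"
  unfolding geod_dist_def by (rule cInf_greatest) auto

lemma gd_tri:
  assumes "\<exists>xs. is_chain V E xs x y" "\<exists>ys. is_chain V E ys y z"
  shows "geod_dist V E x z \<le> geod_dist V E x y + geod_dist V E y z"
proof -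
  have "geod_dist V E x z - geod_dist V E x y \<le> geod_dist V E y z"
  proof (rule gd_ge[OF assms(2)])
    fix ys assume ys: "is_chain V E ys y z"
    have "geod_dist V E x z - chain_length ys \<le> geod_dist V E x y"
    proof (rule gd_ge[OF assms(1)])
      fix xs assume xs: "is_chain V E xs x y"
      from chain_append[OF xs ys] have "geod_dist V E x z \<le> chain_length xs + chain_length ys"
        using gd_lower by metis
      then show "geod_dist V E x z - chain_length ys \<le> chain_length xs" by simp
    qed
    then show "geod_dist V E x z - geod_dist V E x y \<le> chain_length ys" by simp
  qed
  then show ?thesis by simp
qed

lemma gd_edge: "(b, a) \<in> E \<Longrightarrow> a \<in> V \<Longrightarrow> b \<in> V \<Longrightarrow> geod_dist V E a b \<le> norm (b - a)"
  using gd_lower[of V E "[a, b]" a b]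
  by (simp add: is_chain_cons2 is_chain_single chain_length_cons2 chain_length_single)

lemma gd_refl: "a \<in> V \<Longrightarrow> geod_dist V E a a \<le> 0"
  using gd_lower[of V E "[a]" a a] by (simp add: is_chain_single chain_length_single)

lemma gd_pos: "x \<noteq> y \<Longrightarrow> \<exists>xs. is_chain V E xs x y \<Longrightarrow> 0 < geod_dist V E x y"
proof -
  assume "x \<noteq> y" "\<exists>xs. is_chain V E xs x y"
  then have "norm (y - x) \<le> geod_dist V E x y" using gd_ge chain_norm by metis
  moreover have "0 < norm (y - x)" using \<open>x \<noteq> y\<close> by simp
  ultimately show ?thesis by linarith
qed



definition Fk :: "(real^'n \<Rightarrow> real) \<Rightarrow> (real^'n) set \<Rightarrow> real^'n \<Rightarrow> real \<Rightarrow> real" where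
  "Fk g A x y = (SUP a\<in>A. \<bar>g a - y\<bar> / norm (a - x))"

lemma Fk_Max: "finite A \<Longrightarrow> A \<noteq> {} \<Longrightarrow> Fk g A x y = Max ((\<lambda>a. \<bar>g a - y\<bar> / norm (a - x)) ` A)"
  unfolding Fk_def by (simp add: cSup_eq_Max)

lemma Fk_ge: "finite A \<Longrightarrow> a \<in> A \<Longrightarrow> \<bar>g a - y\<bar> / norm (a - x) \<le> Fk g A x y"
  by (subst Fk_Max) auto

lemma Fk_less: "finite A \<Longrightarrow> A \<noteq> {} \<Longrightarrow> (\<And>a. a \<in> A \<Longrightarrow> \<bar>g a - y\<bar> / norm (a - x) < c) \<Longrightarrow> Fk g A x y < c"
  by (subst Fk_Max) auto

lemma Fk_attained: "finite A \<Longrightarrow> A \<noteq> {} \<Longrightarrow> \<exists>a\<in>A. Fk g A x y = \<bar>g a - y\<bar> / norm (a - x)"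
proof -
  assume fin: "finite A" and ne: "A \<noteq> {}"
  have "Max ((\<lambda>a. \<bar>g a - y\<bar> / norm (a - x)) ` A) \<in> (\<lambda>a. \<bar>g a - y\<bar> / norm (a - x)) ` A"
    by (rule Max_in) (use fin ne in auto)
  then obtain a where a: "a \<in> A" "Max ((\<lambda>a. \<bar>g a - y\<bar> / norm (a - x)) ` A) = \<bar>g a - y\<bar> / norm (a - x)" by blast
  show ?thesis by (rule bexI[OF _ a(1)]) (simp add: Fk_Max[OF fin ne] a(2))
qed

lemma cont_Max:
  fixes h :: "'b \<Rightarrow> real \<Rightarrow> real"
  assumes "finite A" "A \<noteq> {}" "\<And>a. a \<in> A \<Longrightarrow> continuous_on UNIV (h a)"
  shows "continuous_on UNIV (\<lambda>y. Max ((\<lambda>a. h a y) ` A))"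
  using assms
proof (induction A rule: finite_ne_induct)
  case (singleton a) then show ?case by simp
next
  case (insert a A)
  have "(\<lambda>y. Max ((\<lambda>a. h a y) ` insert a A)) = (\<lambda>y. max (h a y) (Max ((\<lambda>a. h a y) ` A)))"
    using insert by (auto simp: Max_insert)
  then show ?case using insert by (auto intro!: continuous_on_max)
qed

lemma Fk_min_exists:
  assumes "finite A" "A \<noteq> {}" "x \<notin> A"
  shows "\<exists>y. \<forall>z. Fk g A x y \<le> Fk g A x z"
proof -
  let ?m = "Min (g ` A)" and ?M = "Max (g ` A)"
  obtain a0 where "a0 \<in> A" using assms by blast
  have le: "?m \<le> ?M" using assms \<open>a0 \<in> A\<close>
    by (meson Max_ge Min_le dual_order.trans finite_imageI imageI)
  have eq: "Fk g A x = (\<lambda>y. Max ((\<lambda>a. \<bar>g a - y\<bar> / norm (a - x)) ` A))"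
    using Fk_Max assms by blast
  have "continuous_on UNIV (\<lambda>y. Max ((\<lambda>a. \<bar>g a - y\<bar> / norm (a - x)) ` A))"
    by (rule cont_Max) (use assms in \<open>auto intro!: continuous_intros\<close>)
  then have cont: "continuous_on {?m..?M} (Fk g A x)"
    unfolding eq using continuous_on_subset by blast
  obtain y where y: "y \<in> {?m..?M}" "\<forall>z\<in>{?m..?M}. Fk g A x y \<le> Fk g A x z"
    using continuous_attains_inf[OF compact_Icc _ cont] le by auto
  show ?thesis
  proof (intro exI allI)
    fix z
    let ?c = "max ?m (min ?M z)"
    obtain a where a: "a \<in> A" "Fk g A x ?c = \<bar>g a - ?c\<bar> / norm (a - x)"
      using Fk_attained assms by blast
    have "?m \<le> g a" "g a \<le> ?M" using a assms by auto
    then have "\<bar>g a - ?c\<bar> \<le> \<bar>g a - z\<bar>" by linarith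
    then have "\<bar>g a - ?c\<bar> / norm (a - x) \<le> \<bar>g a - z\<bar> / norm (a - x)"
      by (simp add: divide_right_mono)
    also have "\<dots> \<le> Fk g A x z" using Fk_ge assms a by blast
    finally have "Fk g A x ?c \<le> Fk g A x z" using a by simp
    moreover have "?c \<in> {?m..?M}" using le by auto
    ultimately show "Fk g A x y \<le> Fk g A x z" using y by fastforce
  qed
qed

lemma mid_aux: fixes t M y1 c :: real
  shows "M \<le> \<bar>t - c\<bar> \<Longrightarrow> \<bar>t - y1\<bar> \<le> M \<Longrightarrow> \<bar>t - (2 * c - y1)\<bar> \<le> M \<Longrightarrow> y1 \<noteq> c \<Longrightarrow> False"
  by (smt (verit))

lemma Fk_min_unique:
  assumes "finite A" "A \<noteq> {}" "x \<notin> A"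
    and m1: "\<forall>z. Fk g A x y1 \<le> Fk g A x z" and m2: "\<forall>z. Fk g A x y2 \<le> Fk g A x z"
  shows "y1 = y2"
proof (rule ccontr)
  assume ne: "y1 \<noteq> y2"
  let ?c = "(y1 + y2) / 2"
  let ?m = "Fk g A x y1"
  have e: "Fk g A x y2 = ?m" using m1 m2 by (meson antisym)
  obtain a where a: "a \<in> A" "Fk g A x ?c = \<bar>g a - ?c\<bar> / norm (a - x)" using Fk_attained assms by blast
  have w: "norm (a - x) > 0" using assms(3) a by auto
  have "?m \<le> \<bar>g a - ?c\<bar> / norm (a - x)" using m1 a by metis
  then have h0: "?m * norm (a - x) \<le> \<bar>g a - ?c\<bar>" using w by (simp add: pos_le_divide_eq)
  have "\<bar>g a - y1\<bar> / norm (a - x) \<le> ?m" using Fk_ge assms a by blast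
  then have h1: "\<bar>g a - y1\<bar> \<le> ?m * norm (a - x)" using w by (simp add: pos_divide_le_eq)
  have "\<bar>g a - y2\<bar> / norm (a - x) \<le> ?m" using Fk_ge[of A a g y2 x] assms a e by simp
  then have h2: "\<bar>g a - y2\<bar> \<le> ?m * norm (a - x)" using w by (simp add: pos_divide_le_eq)
  have y2: "y2 = 2 * ?c - y1" by (simp add: field_simps)
  have nc: "y1 \<noteq> ?c" using ne by (simp add: field_simps)
  have h2': "\<bar>g a - (2 * ?c - y1)\<bar> \<le> ?m * norm (a - x)" using h2 y2 by simp
  show False using mid_aux[OF h0 h1 h2' nc] .
qed

lemma kirsz_K_Fk: "kirsz_K g A x = (THE y. \<forall>z. Fk g A x y \<le> Fk g A x z)"
  by (simp add: kirsz_K_def Fk_def)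

lemma K_min:
  assumes "finite A" "A \<noteq> {}" "x \<notin> A"
  shows "\<forall>z. Fk g A x (kirsz_K g A x) \<le> Fk g A x z"
proof -
  have "\<exists>!y. \<forall>z. Fk g A x y \<le> Fk g A x z"
    using Fk_min_exists[OF assms] Fk_min_unique[OF assms] by blast
  then show ?thesis unfolding kirsz_K_Fk by (rule theI')
qed



lemma Fk_upper_side:
  assumes fin: "finite A" and ne: "A \<noteq> {}" and xA: "x \<notin> A"
    and mn: "\<forall>z. Fk g A x y0 \<le> Fk g A x z"
  shows "\<exists>a\<in>A. g a \<ge> y0 \<and> \<bar>g a - y0\<bar> / norm (a - x) = Fk g A x y0"
proof (rule ccontr)
  assume H: "\<not> ?thesis"
  let ?m = "Fk g A x y0"
  define w where "w a = norm (a - x)" for a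
  have wpos: "\<And>a. a \<in> A \<Longrightarrow> w a > 0" using xA unfolding w_def by auto
  have tle0: "\<And>a. a \<in> A \<Longrightarrow> \<bar>g a - y0\<bar> / w a \<le> ?m" unfolding w_def using Fk_ge fin by blast
  have tle: "\<And>a. a \<in> A \<Longrightarrow> \<bar>g a - y0\<bar> \<le> ?m * w a"
    using tle0 wpos by (simp add: pos_divide_le_eq)
  have mpos: "?m > 0"
  proof -
    obtain a where a: "a \<in> A" using ne by blast
    have "0 \<le> \<bar>g a - y0\<bar> / w a" using wpos[OF a] by simp
    then have m0: "0 \<le> ?m" using tle0[OF a] by linarith
    show ?thesis
    proof (rule ccontr)
      assume "\<not> ?m > 0"
      then have "?m = 0" using m0 by linarith
      then have "g a = y0" using tle[OF a] by simp
      then show False using H a \<open>?m = 0\<close> by (auto simp: w_def)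
    qed
  qed
  have g1: "\<And>a. a \<in> A \<Longrightarrow> g a \<ge> y0 \<Longrightarrow> \<bar>g a - y0\<bar> < ?m * w a"
  proof -
    fix a assume a: "a \<in> A" "g a \<ge> y0"
    have "\<bar>g a - y0\<bar> / w a \<noteq> ?m" using H a by (auto simp: w_def)
    then have "\<bar>g a - y0\<bar> / w a < ?m" using tle0[OF a(1)] by linarith
    then show "\<bar>g a - y0\<bar> < ?m * w a" using wpos[OF a(1)] by (simp add: pos_divide_less_eq)
  qed
  define h where "h a = (if g a \<ge> y0 then ?m * w a - \<bar>g a - y0\<bar> else ?m * w a)" for a
  define \<delta> where "\<delta> = Min (h ` A)"
  have hpos: "\<And>a. a \<in> A \<Longrightarrow> h a > 0" unfolding h_def using g1 wpos mpos by auto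
  have dpos: "\<delta> > 0" unfolding \<delta>_def using fin ne hpos by auto
  have dle: "\<And>a. a \<in> A \<Longrightarrow> \<delta> \<le> h a" unfolding \<delta>_def using fin by auto
  let ?z = "y0 - \<delta> / 2"
  have "Fk g A x ?z < ?m"
  proof (rule Fk_less[OF fin ne])
    fix a assume a: "a \<in> A"
    have "\<bar>g a - ?z\<bar> < ?m * w a"
    proof (cases "g a \<ge> y0")
      case True
      then show ?thesis using dle[OF a] dpos unfolding h_def by auto
    next
      case False
      then show ?thesis using dle[OF a] dpos tle[OF a] unfolding h_def by auto
    qed
    then show "\<bar>g a - ?z\<bar> / norm (a - x) < ?m"
      using wpos[OF a] by (simp add: pos_divide_less_eq w_def)
  qed
  then show False using mn by (meson not_le)
qed

lemma Fk_neg: "Fk (\<lambda>a. - g a) A x (- y) = Fk g A x y"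
proof -
  have "\<And>a. \<bar>- g a - - y\<bar> = \<bar>g a - y\<bar>" by arith
  then show ?thesis unfolding Fk_def by simp
qed

lemma Fk_lower_side:
  assumes fin: "finite A" and ne: "A \<noteq> {}" and xA: "x \<notin> A"
    and mn: "\<forall>z. Fk g A x y0 \<le> Fk g A x z"
  shows "\<exists>a\<in>A. g a \<le> y0 \<and> \<bar>g a - y0\<bar> / norm (a - x) = Fk g A x y0"
proof -
  have "\<forall>z. Fk (\<lambda>a. - g a) A x (- y0) \<le> Fk (\<lambda>a. - g a) A x z"
  proof
    fix z
    have "Fk (\<lambda>a. - g a) A x z = Fk g A x (- z)" using Fk_neg[of g A x "- z"] by simp
    then show "Fk (\<lambda>a. - g a) A x (- y0) \<le> Fk (\<lambda>a. - g a) A x z" using mn Fk_neg by metis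
  qed
  from Fk_upper_side[OF fin ne xA this] obtain a where
    a: "a \<in> A" "- g a \<ge> - y0" "\<bar>- g a - - y0\<bar> / norm (a - x) = Fk (\<lambda>a. - g a) A x (- y0)" by blast
  have "\<bar>- g a - - y0\<bar> = \<bar>g a - y0\<bar>" by arith
  then show ?thesis using a Fk_neg[of g A x y0] by (intro bexI[of _ a]) auto
qed



lemma descend:
  fixes u :: "'a \<Rightarrow> real" and d :: "'a \<Rightarrow> 'a \<Rightarrow> real"
  assumes fin: "finite V" and \<Omega>V: "\<Omega> \<subseteq> V"
    and step: "\<And>q. q \<in> V \<Longrightarrow> q \<notin> \<Omega> \<Longrightarrow> P q \<Longrightarrow> \<exists>a\<in>V. P a \<and> u a < u q \<and> d q a \<le> u q - u a"
    and tri: "\<And>x y z. x \<in> V \<Longrightarrow> y \<in> V \<Longrightarrow> z \<in> V \<Longrightarrow> d x z \<le> d x y + d y z"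
    and refl: "\<And>x. x \<in> V \<Longrightarrow> d x x \<le> 0"
  shows "q \<in> V \<Longrightarrow> P q \<Longrightarrow> \<exists>\<omega>\<in>\<Omega>. u \<omega> \<le> u q \<and> d q \<omega> \<le> u q - u \<omega>"
proof (induction "card {v\<in>V. u v < u q}" arbitrary: q rule: less_induct)
  case less
  show ?case
  proof (cases "q \<in> \<Omega>")
    case True then show ?thesis using refl less.prems by (intro bexI[of _ q]) auto
  next
    case False
    obtain a where a: "a \<in> V" "P a" "u a < u q" "d q a \<le> u q - u a" using step less.prems False by blast
    have "{v\<in>V. u v < u a} \<subset> {v\<in>V. u v < u q}" using a by auto
    then have "card {v\<in>V. u v < u a} < card {v\<in>V. u v < u q}"
      by (rule psubset_card_mono[rotated]) (use fin in auto)
    then obtain \<omega> where w: "\<omega> \<in> \<Omega>" "u \<omega> \<le> u a" "d a \<omega> \<le> u a - u \<omega>" using less.hyps a by blast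
    moreover have "d q \<omega> \<le> d q a + d a \<omega>" using tri less.prems a \<Omega>V w(1) by blast
    ultimately show ?thesis using a by (intro bexI[of _ \<omega>]) auto
  qed
qed

lemma propagate:
  assumes "is_chain V E xs x y" "sym E" "x \<in> W" "\<And>v. v \<in> W \<Longrightarrow> v \<notin> \<Omega> \<Longrightarrow> nbhd V E v \<subseteq> W"
  shows "y \<in> W \<or> W \<inter> \<Omega> \<noteq> {}"
  using assms(1,3)
proof (induction xs arbitrary: x rule: my_list012)
  case 1 then show ?case by (simp add: is_chain_def)
next
  case (2 a) then show ?case by (auto simp: is_chain_single)
next
  case (3 a b zs)
  have c: "a = x" "(b, a) \<in> E" "is_chain V E (b # zs) b y" using is_chain_cons2D[OF 3(3)] by auto
  show ?case
  proof (cases "x \<in> \<Omega>")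
    case True then show ?thesis using 3 by auto
  next
    case False
    have "b \<in> V" using c(3) by (auto simp: is_chain_def)
    moreover have "(x, b) \<in> E" using c assms(2) by (meson symD)
    ultimately have "b \<in> nbhd V E x" by (simp add: nbhd_def)
    then have "b \<in> W" using assms(4) 3(4) False by blast
    then show ?thesis using 3(2)[OF c(3)] by blast
  qed
qed



theorem mainTheorem4:
  fixes V :: "(real^'n) set" and E :: "((real^'n) \<times> (real^'n)) set" and \<Omega> :: "(real^'n) set"
    and f u :: "real^'n \<Rightarrow> real"
  assumes "finite_graph V E" and "graph_connected V E"
    and "\<Omega> \<subseteq> V" and "\<Omega> \<noteq> {}"
    and "is_kirszbraun_ext V E \<Omega> f u"
  shows "sup0 {\<bar>u x - u y\<bar> / geod_dist V E x y | x y. x \<in> V \<and> y \<in> V \<and> x \<noteq> y}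
           \<le> sup0 {\<bar>f x - f y\<bar> / geod_dist V E x y | x y. x \<in> \<Omega> \<and> y \<in> \<Omega> \<and> x \<noteq> y}
       \<and> (\<forall>x\<in>V. (INF z\<in>\<Omega>. f z) \<le> u x \<and> u x \<le> (SUP z\<in>\<Omega>. f z))"
proof -
  from assms(1) have finV: "finite V" and EV: "E \<subseteq> V \<times> V" and symE: "sym E" and irr: "\<And>x. (x, x) \<notin> E"
    by (auto simp: finite_graph_def)
  have conn: "\<And>x y. x \<in> V \<Longrightarrow> y \<in> V \<Longrightarrow> \<exists>xs. is_chain V E xs x y"
    using assms(2) unfolding graph_connected_def by blast
  have ext\<Omega>: "\<And>x. x \<in> \<Omega> \<Longrightarrow> u x = f x"
    and extK: "\<And>x. x \<in> V \<Longrightarrow> x \<notin> \<Omega> \<Longrightarrow> u x = kirsz_K u (nbhd V E x) x"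
    using assms(5) by (auto simp: is_kirszbraun_ext_def)
  have finN: "\<And>x. finite (nbhd V E x)" using finV by (simp add: nbhd_def)
  have xN: "\<And>x. x \<notin> nbhd V E x" using irr by (simp add: nbhd_def)
  have NV: "\<And>x. nbhd V E x \<subseteq> V" by (auto simp: nbhd_def)
  have symE': "\<And>a b. (a, b) \<in> E \<Longrightarrow> (b, a) \<in> E" using symE by (meson symD)
  have EVa: "\<And>a b. (a, b) \<in> E \<Longrightarrow> a \<in> V \<and> b \<in> V" using EV by auto
  have inN: "\<And>a b. (a, b) \<in> E \<Longrightarrow> b \<in> nbhd V E a" using EVa by (simp add: nbhd_def)
  have Nin: "\<And>a b. b \<in> nbhd V E a \<Longrightarrow> (a, b) \<in> E" by (simp add: nbhd_def)
  have finO: "finite \<Omega>" using finV assms(3) finite_subset by blast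
  have neN: "\<And>x. x \<in> V \<Longrightarrow> x \<notin> \<Omega> \<Longrightarrow> nbhd V E x \<noteq> {}"
  proof -
    fix x assume x: "x \<in> V" "x \<notin> \<Omega>"
    obtain \<omega> where "\<omega> \<in> \<Omega>" using assms(4) by blast
    then obtain xs where c: "is_chain V E xs x \<omega>" using conn x assms(3) by blast
    then obtain a rest where xs: "xs = a # rest" unfolding is_chain_def by (cases xs) auto
    show "nbhd V E x \<noteq> {}"
    proof (cases rest)
      case Nil
      then show ?thesis using c xs x \<open>\<omega> \<in> \<Omega>\<close> by (auto simp: is_chain_single)
    next
      case (Cons b zs)
      then have "(b, x) \<in> E" using is_chain_cons2D[of V E a b zs x \<omega>] c xs by auto
      then show ?thesis using inN symE' by blast
    qed
  qed
  have Kmin: "\<And>x. x \<in> V \<Longrightarrow> x \<notin> \<Omega> \<Longrightarrow> \<forall>z. Fk u (nbhd V E x) x (u x) \<le> Fk u (nbhd V E x) x z"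
    using K_min[OF finN neN xN] extK by metis
  have up: "\<And>x. x \<in> V \<Longrightarrow> x \<notin> \<Omega> \<Longrightarrow> \<exists>a\<in>nbhd V E x. u a \<ge> u x \<and> \<bar>u a - u x\<bar> / norm (a - x) = Fk u (nbhd V E x) x (u x)"
    using Fk_upper_side[OF finN neN xN Kmin] by blast
  have lo: "\<And>x. x \<in> V \<Longrightarrow> x \<notin> \<Omega> \<Longrightarrow> \<exists>a\<in>nbhd V E x. u a \<le> u x \<and> \<bar>u a - u x\<bar> / norm (a - x) = Fk u (nbhd V E x) x (u x)"
    using Fk_lower_side[OF finN neN xN Kmin] by blast
  have npos: "\<And>a b. (a, b) \<in> E \<Longrightarrow> norm (a - b) > 0" using irr by (metis zero_less_norm_iff right_minus_eq)
  have zeroFk: "\<And>v a. v \<in> V \<Longrightarrow> Fk u (nbhd V E v) v (u v) = 0 \<Longrightarrow> a \<in> nbhd V E v \<Longrightarrow> u a = u v"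
  proof -
    fix v a assume v: "v \<in> V" "Fk u (nbhd V E v) v (u v) = 0" "a \<in> nbhd V E v"
    have "\<bar>u a - u v\<bar> / norm (a - v) \<le> 0" using Fk_ge[OF finN v(3), of u "u v" v] v(2) by simp
    moreover have "norm (a - v) > 0" using npos[OF Nin[OF v(3)]] by (simp add: norm_minus_commute)
    ultimately have "\<bar>u a - u v\<bar> \<le> 0" by (simp add: divide_le_0_iff)
    then show "u a = u v" by simp
  qed
  have part2: "\<forall>x\<in>V. (INF z\<in>\<Omega>. f z) \<le> u x \<and> u x \<le> (SUP z\<in>\<Omega>. f z)"
  proof
    fix x0 assume x0: "x0 \<in> V"
    obtain \<omega>0 where \<omega>0: "\<omega>0 \<in> \<Omega>" using assms(4) by blast
    have Vne: "V \<noteq> {}" using x0 by blast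
    let ?M = "Max (u ` V)"
    have "?M \<in> u ` V" using finV Vne by simp
    then obtain xm where xm: "xm \<in> V" "u xm = ?M" by (metis imageE)
    define W where "W = {v\<in>V. u v = ?M}"
    have closedW: "\<And>v. v \<in> W \<Longrightarrow> v \<notin> \<Omega> \<Longrightarrow> nbhd V E v \<subseteq> W"
    proof
      fix v a assume v: "v \<in> W" "v \<notin> \<Omega>" and a: "a \<in> nbhd V E v"
      have vV: "v \<in> V" using v W_def by auto
      obtain b where b: "b \<in> nbhd V E v" "u b \<ge> u v" "\<bar>u b - u v\<bar> / norm (b - v) = Fk u (nbhd V E v) v (u v)"
        using up[OF vV v(2)] by blast
      have "b \<in> V" using b(1) NV by blast
      then have "u b \<le> ?M" using finV by simp
      then have "u b = u v" using b(2) v W_def by auto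
      then have "Fk u (nbhd V E v) v (u v) = 0" using b(3) by simp
      then have "u a = u v" using zeroFk vV a by blast
      then show "a \<in> W" using a NV v W_def by auto
    qed
    obtain xs where "is_chain V E xs xm \<omega>0" using conn xm(1) \<omega>0 assms(3) by blast
    from propagate[OF this symE _ closedW] xm have "\<omega>0 \<in> W \<or> W \<inter> \<Omega> \<noteq> {}" unfolding W_def by auto
    then obtain \<omega>1 where \<omega>1: "\<omega>1 \<in> \<Omega>" "u \<omega>1 = ?M" using \<omega>0 W_def by auto
    have "u x0 \<le> ?M" using x0 finV by auto
    also have "\<dots> = f \<omega>1" using \<omega>1 ext\<Omega> by simp
    also have "\<dots> \<le> (SUP z\<in>\<Omega>. f z)" by (rule cSUP_upper[OF \<omega>1(1)]) (use finO in auto)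
    finally have upper: "u x0 \<le> (SUP z\<in>\<Omega>. f z)" .
    let ?m = "Min (u ` V)"
    have "?m \<in> u ` V" using finV Vne by simp
    then obtain xn where xn: "xn \<in> V" "u xn = ?m" by (metis imageE)
    define W' where "W' = {v\<in>V. u v = ?m}"
    have closedW': "\<And>v. v \<in> W' \<Longrightarrow> v \<notin> \<Omega> \<Longrightarrow> nbhd V E v \<subseteq> W'"
    proof
      fix v a assume v: "v \<in> W'" "v \<notin> \<Omega>" and a: "a \<in> nbhd V E v"
      have vV: "v \<in> V" using v W'_def by auto
      obtain b where b: "b \<in> nbhd V E v" "u b \<le> u v" "\<bar>u b - u v\<bar> / norm (b - v) = Fk u (nbhd V E v) v (u v)"
        using lo[OF vV v(2)] by blast
      have "b \<in> V" using b(1) NV by blast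
      then have "u b \<ge> ?m" using finV by simp
      then have "u b = u v" using b(2) v W'_def by auto
      then have "Fk u (nbhd V E v) v (u v) = 0" using b(3) by simp
      then have "u a = u v" using zeroFk vV a by blast
      then show "a \<in> W'" using a NV v W'_def by auto
    qed
    obtain ys where "is_chain V E ys xn \<omega>0" using conn xn(1) \<omega>0 assms(3) by blast
    from propagate[OF this symE _ closedW'] xn have "\<omega>0 \<in> W' \<or> W' \<inter> \<Omega> \<noteq> {}" unfolding W'_def by auto
    then obtain \<omega>2 where \<omega>2: "\<omega>2 \<in> \<Omega>" "u \<omega>2 = ?m" using \<omega>0 W'_def by auto
    have "(INF z\<in>\<Omega>. f z) \<le> f \<omega>2" by (rule cINF_lower[OF _ \<omega>2(1)]) (use finO in auto)
    also have "\<dots> = ?m" using \<omega>2 ext\<Omega> by simp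
    also have "\<dots> \<le> u x0" using x0 finV by auto
    finally show "(INF z\<in>\<Omega>. f z) \<le> u x0 \<and> u x0 \<le> (SUP z\<in>\<Omega>. f z)" using upper by simp
  qed
  define S where "S = {\<bar>f x - f y\<bar> / geod_dist V E x y | x y. x \<in> \<Omega> \<and> y \<in> \<Omega> \<and> x \<noteq> y}"
  define L where "L = sup0 S"
  have finS: "finite S"
  proof -
    have "S \<subseteq> (\<lambda>(x, y). \<bar>f x - f y\<bar> / geod_dist V E x y) ` (\<Omega> \<times> \<Omega>)" unfolding S_def by auto
    then show ?thesis using finO finite_subset by blast
  qed
  have L0: "0 \<le> L" unfolding L_def sup0_def by (rule cSup_upper) (use finS in auto)
  have LS: "\<And>s. s \<in> S \<Longrightarrow> s \<le> L" unfolding L_def sup0_def by (rule cSup_upper) (use finS in auto)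
  have gdtri: "\<And>x y z. x \<in> V \<Longrightarrow> y \<in> V \<Longrightarrow> z \<in> V \<Longrightarrow> geod_dist V E x z \<le> geod_dist V E x y + geod_dist V E y z"
    by (rule gd_tri) (use conn in auto)
  have edge: "\<And>p q. (p, q) \<in> E \<Longrightarrow> \<bar>u p - u q\<bar> \<le> L * norm (p - q)"
  proof (rule ccontr)
    fix p0 q0 assume e0: "(p0, q0) \<in> E" and "\<not> \<bar>u p0 - u q0\<bar> \<le> L * norm (p0 - q0)"
    then have e0': "L * norm (p0 - q0) < \<bar>u p0 - u q0\<bar>" by simp
    define R where "R = (\<lambda>(p, q). \<bar>u p - u q\<bar> / norm (p - q)) ` E"
    have finE: "finite E" using finV EV by (meson finite_SigmaI finite_subset)
    have finR: "finite R" "R \<noteq> {}" unfolding R_def using finE e0 by auto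
    define L' where "L' = Max R"
    have L'ge: "\<And>p q. (p, q) \<in> E \<Longrightarrow> \<bar>u p - u q\<bar> / norm (p - q) \<le> L'"
    proof -
      fix p q assume "(p, q) \<in> E"
      then have "\<bar>u p - u q\<bar> / norm (p - q) \<in> R" unfolding R_def by force
      then show "\<bar>u p - u q\<bar> / norm (p - q) \<le> L'" unfolding L'_def using finR(1) by simp
    qed
    have "L < \<bar>u p0 - u q0\<bar> / norm (p0 - q0)" using e0' npos[OF e0] by (simp add: pos_less_divide_eq)
    then have LL': "L < L'" using L'ge[OF e0] by linarith
    then have L'pos: "0 < L'" using L0 by linarith
    have "L' \<in> R" unfolding L'_def using finR by simp
    then obtain p1 q1 where pq1: "(p1, q1) \<in> E" "\<bar>u p1 - u q1\<bar> / norm (p1 - q1) = L'" unfolding R_def by auto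
    then have pq1': "\<bar>u p1 - u q1\<bar> = L' * norm (p1 - q1)" using npos[OF pq1(1)] by (simp add: divide_eq_eq)
    define steep where "steep a b \<longleftrightarrow> (a, b) \<in> E \<and> u a - u b = L' * norm (a - b)" for a b
    obtain p q where st: "steep p q"
    proof (cases "u p1 \<ge> u q1")
      case True then show ?thesis using that[of p1 q1] pq1 pq1' unfolding steep_def by auto
    next
      case False then show ?thesis using that[of q1 p1] pq1 pq1' symE' unfolding steep_def
        by (auto simp: norm_minus_commute)
    qed
    have stlt: "\<And>a b. steep a b \<Longrightarrow> u b < u a"
    proof -
      fix a b assume ab: "steep a b"
      have "0 < L' * norm (a - b)" using npos L'pos ab unfolding steep_def by simp
      then show "u b < u a" using ab unfolding steep_def by linarith
    qed
    have FkL': "\<And>v b. v \<in> V \<Longrightarrow> b \<in> nbhd V E v \<Longrightarrow> \<bar>u b - u v\<bar> = L' * norm (b - v) \<Longrightarrow> Fk u (nbhd V E v) v (u v) = L'"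
    proof -
      fix v b assume v: "v \<in> V" "b \<in> nbhd V E v" "\<bar>u b - u v\<bar> = L' * norm (b - v)"
      have nb: "norm (b - v) > 0" using npos[OF Nin[OF v(2)]] by (simp add: norm_minus_commute)
      have "L' = \<bar>u b - u v\<bar> / norm (b - v)" using v(3) nb by simp
      also have "\<dots> \<le> Fk u (nbhd V E v) v (u v)" using Fk_ge[OF finN v(2)] .
      finally have g: "L' \<le> Fk u (nbhd V E v) v (u v)" .
      have ne: "nbhd V E v \<noteq> {}" using v(2) by blast
      obtain a where a: "a \<in> nbhd V E v" "Fk u (nbhd V E v) v (u v) = \<bar>u a - u v\<bar> / norm (a - v)"
        using Fk_attained[OF finN ne] by blast
      have "\<bar>u v - u a\<bar> / norm (v - a) \<le> L'" using L'ge[OF Nin[OF a(1)]] .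
      then have "Fk u (nbhd V E v) v (u v) \<le> L'" using a(2) by (simp add: norm_minus_commute abs_minus_commute)
      then show "Fk u (nbhd V E v) v (u v) = L'" using g by simp
    qed
    have down: "\<And>q. q \<in> V \<Longrightarrow> q \<notin> \<Omega> \<Longrightarrow> (\<exists>p. steep p q) \<Longrightarrow> \<exists>a. steep q a"
    proof -
      fix q assume q: "q \<in> V" "q \<notin> \<Omega>" "\<exists>p. steep p q"
      then obtain p where p: "steep p q" by blast
      have pN: "p \<in> nbhd V E q" using p symE' inN unfolding steep_def by blast
      have "\<bar>u p - u q\<bar> = L' * norm (p - q)" using p stlt[OF p] unfolding steep_def by simp
      then have F: "Fk u (nbhd V E q) q (u q) = L'" using FkL'[OF q(1) pN] by simp
      obtain a where a: "a \<in> nbhd V E q" "u a \<le> u q" "\<bar>u a - u q\<bar> / norm (a - q) = L'"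
        using lo[OF q(1) q(2)] F by auto
      have "norm (a - q) > 0" using npos[OF Nin[OF a(1)]] by (simp add: norm_minus_commute)
      then have "u q - u a = L' * norm (q - a)" using a(2,3) by (simp add: divide_eq_eq norm_minus_commute)
      then show "\<exists>a. steep q a" using Nin[OF a(1)] unfolding steep_def by blast
    qed
    have upw: "\<And>p. p \<in> V \<Longrightarrow> p \<notin> \<Omega> \<Longrightarrow> (\<exists>q. steep p q) \<Longrightarrow> \<exists>a. steep a p"
    proof -
      fix p assume p: "p \<in> V" "p \<notin> \<Omega>" "\<exists>q. steep p q"
      then obtain q where q: "steep p q" by blast
      have qN: "q \<in> nbhd V E p" using q inN unfolding steep_def by blast
      have "\<bar>u q - u p\<bar> = L' * norm (q - p)" using q stlt[OF q] unfolding steep_def by (simp add: norm_minus_commute)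
      then have F: "Fk u (nbhd V E p) p (u p) = L'" using FkL'[OF p(1) qN] by simp
      obtain a where a: "a \<in> nbhd V E p" "u a \<ge> u p" "\<bar>u a - u p\<bar> / norm (a - p) = L'"
        using up[OF p(1) p(2)] F by auto
      have "norm (a - p) > 0" using npos[OF Nin[OF a(1)]] by (simp add: norm_minus_commute)
      then have "u a - u p = L' * norm (a - p)" using a(2,3) by (simp add: divide_eq_eq)
      then show "\<exists>a. steep a p" using symE'[OF Nin[OF a(1)]] unfolding steep_def by blast
    qed
    have stV: "\<And>a b. steep a b \<Longrightarrow> a \<in> V \<and> b \<in> V" using EVa unfolding steep_def by blast
    have stgd: "\<And>a b. steep a b \<Longrightarrow> L' * geod_dist V E a b \<le> u a - u b"
    proof -
      fix a b assume ab: "steep a b"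
      have "geod_dist V E a b \<le> norm (b - a)" using gd_edge symE' stV[OF ab] ab unfolding steep_def by blast
      then have "L' * geod_dist V E a b \<le> L' * norm (a - b)" using L'pos by (simp add: norm_minus_commute)
      then show "L' * geod_dist V E a b \<le> u a - u b" using ab unfolding steep_def by simp
    qed
    have stgd': "\<And>a b. steep a b \<Longrightarrow> L' * geod_dist V E b a \<le> u a - u b"
    proof -
      fix a b assume ab: "steep a b"
      have "geod_dist V E b a \<le> norm (a - b)" using gd_edge ab stV[OF ab] unfolding steep_def by blast
      then have "L' * geod_dist V E b a \<le> L' * norm (a - b)" using L'pos by simp
      then show "L' * geod_dist V E b a \<le> u a - u b" using ab unfolding steep_def by simp
    qed
    have D: "\<exists>\<omega>\<in>\<Omega>. u \<omega> \<le> u q \<and> L' * geod_dist V E q \<omega> \<le> u q - u \<omega>"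
    proof (rule descend[where P = "\<lambda>q. \<exists>p. steep p q" and d = "\<lambda>x y. L' * geod_dist V E x y", OF finV assms(3)])
      fix q assume q: "q \<in> V" "q \<notin> \<Omega>" "\<exists>p. steep p q"
      obtain a where a: "steep q a" using down[OF q] by blast
      show "\<exists>a\<in>V. (\<exists>p. steep p a) \<and> u a < u q \<and> L' * geod_dist V E q a \<le> u q - u a"
        using a stV[OF a] stlt[OF a] stgd[OF a] by blast
    next
      fix x y z assume "x \<in> V" "y \<in> V" "z \<in> V"
      then show "L' * geod_dist V E x z \<le> L' * geod_dist V E x y + L' * geod_dist V E y z"
        using gdtri L'pos by (simp add: distrib_left[symmetric])
    next
      fix x assume "x \<in> V" then show "L' * geod_dist V E x x \<le> 0" using gd_refl[of x V E] L'pos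
        by (simp add: mult_nonneg_nonpos)
    qed (use st stV in auto)
    have A: "\<exists>\<omega>\<in>\<Omega>. - u \<omega> \<le> - u p \<and> L' * geod_dist V E \<omega> p \<le> - u p - - u \<omega>"
    proof (rule descend[where P = "\<lambda>p. \<exists>q. steep p q" and d = "\<lambda>x y. L' * geod_dist V E y x" and u = "\<lambda>v. - u v", OF finV assms(3)])
      fix p assume p: "p \<in> V" "p \<notin> \<Omega>" "\<exists>q. steep p q"
      obtain a where a: "steep a p" using upw[OF p] by blast
      show "\<exists>a\<in>V. (\<exists>q. steep a q) \<and> - u a < - u p \<and> L' * geod_dist V E a p \<le> - u p - - u a"
        using a stV[OF a] stlt[OF a] stgd[OF a] by auto
    next
      fix x y z assume "x \<in> V" "y \<in> V" "z \<in> V"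
      then show "L' * geod_dist V E z x \<le> L' * geod_dist V E y x + L' * geod_dist V E z y"
        using gdtri[of z y x] L'pos by (simp add: distrib_left[symmetric])
    next
      fix x assume "x \<in> V" then show "L' * geod_dist V E x x \<le> 0" using gd_refl[of x V E] L'pos
        by (simp add: mult_nonneg_nonpos)
    qed (use st stV in auto)
    obtain \<omega>2 where w2: "\<omega>2 \<in> \<Omega>" "u \<omega>2 \<le> u q" "L' * geod_dist V E q \<omega>2 \<le> u q - u \<omega>2" using D by blast
    obtain \<omega>1 where w1: "\<omega>1 \<in> \<Omega>" "u p \<le> u \<omega>1" "L' * geod_dist V E \<omega>1 p \<le> u \<omega>1 - u p" using A by auto
    have V12: "\<omega>1 \<in> V" "\<omega>2 \<in> V" using w1 w2 assms(3) by auto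
    have pqV: "p \<in> V" "q \<in> V" using stV[OF st] by auto
    have "geod_dist V E \<omega>1 \<omega>2 \<le> geod_dist V E \<omega>1 p + geod_dist V E p \<omega>2" using gdtri V12 pqV by blast
    also have "\<dots> \<le> geod_dist V E \<omega>1 p + (geod_dist V E p q + geod_dist V E q \<omega>2)" using gdtri V12 pqV by simp
    finally have "L' * geod_dist V E \<omega>1 \<omega>2 \<le> L' * geod_dist V E \<omega>1 p + L' * geod_dist V E p q + L' * geod_dist V E q \<omega>2"
      using L'pos by (simp add: distrib_left[symmetric] mult_left_mono)
    also have "\<dots> \<le> u \<omega>1 - u \<omega>2" using w1 w2 stgd[OF st] by linarith
    finally have key: "L' * geod_dist V E \<omega>1 \<omega>2 \<le> u \<omega>1 - u \<omega>2" .
    have lt: "u \<omega>2 < u \<omega>1" using w1 w2 stlt[OF st] by linarith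
    then have ne12: "\<omega>1 \<noteq> \<omega>2" by auto
    have gpos: "0 < geod_dist V E \<omega>1 \<omega>2" using gd_pos[OF ne12] conn V12 by blast
    have "L' \<le> (u \<omega>1 - u \<omega>2) / geod_dist V E \<omega>1 \<omega>2" using key gpos by (simp add: pos_le_divide_eq mult.commute)
    also have "\<dots> = \<bar>f \<omega>1 - f \<omega>2\<bar> / geod_dist V E \<omega>1 \<omega>2" using lt w1 w2 ext\<Omega> by simp
    also have "\<dots> \<le> L" using LS w1 w2 ne12 unfolding S_def by blast
    finally show False using LL' by simp
  qed
  have pairs: "\<And>x y. x \<in> V \<Longrightarrow> y \<in> V \<Longrightarrow> x \<noteq> y \<Longrightarrow> \<bar>u x - u y\<bar> / geod_dist V E x y \<le> L"
  proof -
    fix x y assume xy: "x \<in> V" "y \<in> V" "x \<noteq> y"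
    have ch: "\<exists>xs. is_chain V E xs x y" using conn xy by blast
    have gp: "0 < geod_dist V E x y" using gd_pos[OF xy(3) ch] .
    have "\<bar>u x - u y\<bar> \<le> L * geod_dist V E x y"
    proof (cases "L = 0")
      case True
      obtain xs where "is_chain V E xs x y" using ch by blast
      then show ?thesis using chain_lip[of E u L, OF edge] True by fastforce
    next
      case False
      then have Lp: "L > 0" using L0 by simp
      have "\<bar>u x - u y\<bar> / L \<le> geod_dist V E x y"
      proof (rule gd_ge[OF ch])
        fix xs assume "is_chain V E xs x y"
        then have "\<bar>u x - u y\<bar> \<le> L * chain_length xs" using chain_lip[of E u L, OF edge] by blast
        then show "\<bar>u x - u y\<bar> / L \<le> chain_length xs" using Lp by (simp add: pos_divide_le_eq mult.commute)
      qed
      then show ?thesis using Lp by (simp add: pos_divide_le_eq mult.commute)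
    qed
    then show "\<bar>u x - u y\<bar> / geod_dist V E x y \<le> L" using gp by (simp add: pos_divide_le_eq mult.commute)
  qed
  have part1: "sup0 {\<bar>u x - u y\<bar> / geod_dist V E x y | x y. x \<in> V \<and> y \<in> V \<and> x \<noteq> y} \<le> L"
    unfolding sup0_def by (rule cSup_least) (use L0 pairs in auto)
  show ?thesis using part1 part2 unfolding L_def S_def by blast
qed


end
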